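(* For an algebra $\mathbf{A}$ the following are equivalent: (1) for all compatible reflexive relations $R,S,T$ of $\mathbf{A}$, $R\wedge(S\circ T)\subseteq(R\wedge S)\circ T$; (2) for all compatible reflexive relations $R,S,T$ of $\mathbf{A}$, $R\wedge(S\circ T)\subseteq(R\wedge S)\circ(R\wedge T)$.
   Context: $\wedge$ is intersection and $\circ$ is relational composition. A compatible reflexive relation of $\mathbf{A}$ is a reflexive subuniverse of $\mathbf{A}^2$. *)

theory Defs
  imports Main
begin

text \<open>An algebra is given by a carrier set A and a set of finitary basic operations,
  each operation being a pair (n, f) of its arity n and a function f on lists of length n.\<close>

definition is_algebra :: "'a set \<Rightarrow> (nat \<times> ('a list \<Rightarrow> 'a)) set \<Rightarrow> bool" where
  "is_algebra A F \<longleftrightarrow>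
     (\<forall>(n, f) \<in> F. \<forall>xs. length xs = n \<and> set xs \<subseteq> A \<longrightarrow> f xs \<in> A)"

definition compatible_rel :: "'a set \<Rightarrow> (nat \<times> ('a list \<Rightarrow> 'a)) set \<Rightarrow> 'a rel \<Rightarrow> bool" where
  "compatible_rel A F R \<longleftrightarrow> R \<subseteq> A \<times> A \<and>
     (\<forall>(n, f) \<in> F. \<forall>xs ys. length xs = n \<and> length ys = n \<and>
        list_all2 (\<lambda>x y. (x, y) \<in> R) xs ys \<longrightarrow> (f xs, f ys) \<in> R)"

definition compatible_refl_rel :: "'a set \<Rightarrow> (nat \<times> ('a list \<Rightarrow> 'a)) set \<Rightarrow> 'a rel \<Rightarrow> bool" where
  "compatible_refl_rel A F R \<longleftrightarrow> compatible_rel A F R \<and> refl_on A R"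

end

theory Submission
  imports Defs
begin

lemma crr_conv:
  assumes "compatible_refl_rel A F R" shows "compatible_refl_rel A F (R\<inverse>)"
proof -
  have h: "R \<subseteq> A \<times> A" "refl_on A R"
    and op: "\<And>n f xs ys. (n, f) \<in> F \<Longrightarrow> length xs = n \<Longrightarrow> length ys = n \<Longrightarrow>
        list_all2 (\<lambda>x y. (x, y) \<in> R) xs ys \<Longrightarrow> (f xs, f ys) \<in> R"
    using assms unfolding compatible_refl_rel_def compatible_rel_def by auto
  have "(f xs, f ys) \<in> R\<inverse>" if "(n, f) \<in> F" "length xs = n" "length ys = n"
      "list_all2 (\<lambda>x y. (x, y) \<in> R\<inverse>) xs ys" for n f xs ys
  proof -
    have "list_all2 (\<lambda>x y. (x, y) \<in> R) ys xs" using that(4) by (simp add: list_all2_conv_all_nth)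
    then show ?thesis using op[OF that(1) that(3) that(2)] by simp
  qed
  moreover have "refl_on A (R\<inverse>)" using h by (auto simp: refl_on_def)
  moreover have "R\<inverse> \<subseteq> A \<times> A" using h by auto
  ultimately show ?thesis unfolding compatible_refl_rel_def compatible_rel_def by auto
qed

lemma crr_int:
  assumes "compatible_refl_rel A F R" "compatible_refl_rel A F S"
  shows "compatible_refl_rel A F (R \<inter> S)"
proof -
  have h: "R \<subseteq> A \<times> A" "refl_on A R" "refl_on A S"
    and op: "\<And>n f xs ys. (n, f) \<in> F \<Longrightarrow> length xs = n \<Longrightarrow> length ys = n \<Longrightarrow>
        list_all2 (\<lambda>x y. (x, y) \<in> R) xs ys \<Longrightarrow> (f xs, f ys) \<in> R"
    and op2: "\<And>n f xs ys. (n, f) \<in> F \<Longrightarrow> length xs = n \<Longrightarrow> length ys = n \<Longrightarrow>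
        list_all2 (\<lambda>x y. (x, y) \<in> S) xs ys \<Longrightarrow> (f xs, f ys) \<in> S"
    using assms unfolding compatible_refl_rel_def compatible_rel_def by auto
  have "(f xs, f ys) \<in> R \<inter> S" if "(n, f) \<in> F" "length xs = n" "length ys = n"
      "list_all2 (\<lambda>x y. (x, y) \<in> R \<inter> S) xs ys" for n f xs ys
  proof -
    have "list_all2 (\<lambda>x y. (x, y) \<in> R) xs ys" "list_all2 (\<lambda>x y. (x, y) \<in> S) xs ys"
      using that(4) by (simp_all add: list_all2_conv_all_nth)
    then show ?thesis using op[OF that(1-3)] op2[OF that(1-3)] by simp
  qed
  moreover have "refl_on A (R \<inter> S)" using h by (auto simp: refl_on_def)
  moreover have "R \<inter> S \<subseteq> A \<times> A" using h by auto
  ultimately show ?thesis unfolding compatible_refl_rel_def compatible_rel_def by auto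
qed

theorem theorem5p3:
  fixes A :: "'a set" and F :: "(nat \<times> ('a list \<Rightarrow> 'a)) set"
  assumes "is_algebra A F"
  shows "(\<forall>R S T. compatible_refl_rel A F R \<and> compatible_refl_rel A F S \<and> compatible_refl_rel A F T
            \<longrightarrow> R \<inter> (S O T) \<subseteq> (R \<inter> S) O T)
     \<longleftrightarrow> (\<forall>R S T. compatible_refl_rel A F R \<and> compatible_refl_rel A F S \<and> compatible_refl_rel A F T
            \<longrightarrow> R \<inter> (S O T) \<subseteq> (R \<inter> S) O (R \<inter> T))"
proof
  assume H: "\<forall>R S T. compatible_refl_rel A F R \<and> compatible_refl_rel A F S \<and> compatible_refl_rel A F T
            \<longrightarrow> R \<inter> (S O T) \<subseteq> (R \<inter> S) O T"
  show "\<forall>R S T. compatible_refl_rel A F R \<and> compatible_refl_rel A F S \<and> compatible_refl_rel A F T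
            \<longrightarrow> R \<inter> (S O T) \<subseteq> (R \<inter> S) O (R \<inter> T)"
  proof (intro allI impI subsetI)
    fix R S T p
    assume c: "compatible_refl_rel A F R \<and> compatible_refl_rel A F S \<and> compatible_refl_rel A F T"
      and p: "p \<in> R \<inter> (S O T)"
    obtain a c' where pe: "p = (a, c')" by (cases p)
    have s1: "R \<inter> (S O T) \<subseteq> (R \<inter> S) O T" using H c by blast
    have "(a, c') \<in> (R \<inter> S) O T" using s1 p pe by blast
    then have "(c', a) \<in> R\<inverse> \<inter> (T\<inverse> O (R \<inter> S)\<inverse>)" using p pe by blast
    moreover have "R\<inverse> \<inter> (T\<inverse> O (R \<inter> S)\<inverse>) \<subseteq> (R\<inverse> \<inter> T\<inverse>) O (R \<inter> S)\<inverse>"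
    proof -
      have "compatible_refl_rel A F (R\<inverse>)" "compatible_refl_rel A F (T\<inverse>)"
           "compatible_refl_rel A F ((R \<inter> S)\<inverse>)"
        using c crr_conv crr_int by blast+
      then show ?thesis using H by blast
    qed
    ultimately have "(c', a) \<in> (R\<inverse> \<inter> T\<inverse>) O (R \<inter> S)\<inverse>" by blast
    then show "p \<in> (R \<inter> S) O (R \<inter> T)" using pe by blast
  qed
next
  assume H: "\<forall>R S T. compatible_refl_rel A F R \<and> compatible_refl_rel A F S \<and> compatible_refl_rel A F T
            \<longrightarrow> R \<inter> (S O T) \<subseteq> (R \<inter> S) O (R \<inter> T)"
  show "\<forall>R S T. compatible_refl_rel A F R \<and> compatible_refl_rel A F S \<and> compatible_refl_rel A F T
            \<longrightarrow> R \<inter> (S O T) \<subseteq> (R \<inter> S) O T"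
  proof (intro allI impI)
    fix R S T
    assume "compatible_refl_rel A F R \<and> compatible_refl_rel A F S \<and> compatible_refl_rel A F T"
    then have "R \<inter> (S O T) \<subseteq> (R \<inter> S) O (R \<inter> T)" using H by blast
    then show "R \<inter> (S O T) \<subseteq> (R \<inter> S) O T" by blast
  qed
qed

end
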